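(* Let $W,M$ be disjoint with $|W|=|M|=n$ and let $(w,m)\in W\times M$ be fixed. Both the nondeterministic and the co-nondeterministic two-party communication complexities of determining whether $(w,m)$ is married in some (respectively, every) stable marriage of $(W,M,\succ_W,\succ_M)$, where Alice holds the women's full preference profile $\succ_W$ and Bob holds the men's full preference profile $\succ_M$, are $\Omega(n^2)$.
   Context: A full preference profile of the women gives each woman a total order on $M$; that of the men gives each man a total order on $W$. A perfect marriage is a bijection between $W$ and $M$. A pair $(w,m)$ is blocking for $\mu$ if $w$ prefers $m$ to her spouse in $\mu$ and $m$ prefers $w$ to his spouse in $\mu$; $\mu$ is stable if it has no blocking pair. Nondeterministic communication complexity of a Boolean function is the minimum, over protocols with a guessed certificate, of the worst-case number of bits (including certificate) needed so that accepting computations exist exactly on $1$-inputs; co-nondeterministic complexity is the nondeterministic complexity of the negated function. Bounds are asymptotic in $n$. *)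

theory Defs
  imports Complex_Main
begin

datatype ('a, 'b) protocol =
    Output bool
  | AliceSends "'a \<Rightarrow> bool" "('a, 'b) protocol" "('a, 'b) protocol"
  | BobSends "'b \<Rightarrow> bool" "('a, 'b) protocol" "('a, 'b) protocol"

fun run :: "('a, 'b) protocol \<Rightarrow> 'a \<Rightarrow> 'b \<Rightarrow> bool" where
  "run (Output v) x y = v"
| "run (AliceSends f P0 P1) x y = (if f x then run P1 x y else run P0 x y)"
| "run (BobSends g P0 P1) x y = (if g y then run P1 x y else run P0 x y)"

fun depth :: "('a, 'b) protocol \<Rightarrow> nat" where
  "depth (Output v) = 0"
| "depth (AliceSends f P0 P1) = Suc (max (depth P0) (depth P1))"
| "depth (BobSends g P0 P1) = Suc (max (depth P0) (depth P1))"

text \<open>Nondeterministic protocol: a guessed certificate z of k bits, seen by both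
players, followed by a deterministic protocol.\<close>

definition nd_computes ::
  "'a set \<Rightarrow> 'b set \<Rightarrow> ('a \<Rightarrow> 'b \<Rightarrow> bool) \<Rightarrow> nat \<Rightarrow> ('a \<times> bool list, 'b \<times> bool list) protocol \<Rightarrow> bool" where
  "nd_computes X Y f k P \<longleftrightarrow>
     (\<forall>x\<in>X. \<forall>y\<in>Y. f x y \<longleftrightarrow> (\<exists>z. length z = k \<and> run P (x, z) (y, z)))"

definition nd_cost_le :: "'a set \<Rightarrow> 'b set \<Rightarrow> ('a \<Rightarrow> 'b \<Rightarrow> bool) \<Rightarrow> nat \<Rightarrow> bool" where
  "nd_cost_le X Y f c \<longleftrightarrow> (\<exists>k P. nd_computes X Y f k P \<and> k + depth P \<le> c)"

definition ncc :: "'a set \<Rightarrow> 'b set \<Rightarrow> ('a \<Rightarrow> 'b \<Rightarrow> bool) \<Rightarrow> nat" where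
  "ncc X Y f = (LEAST c. nd_cost_le X Y f c)"

definition concc :: "'a set \<Rightarrow> 'b set \<Rightarrow> ('a \<Rightarrow> 'b \<Rightarrow> bool) \<Rightarrow> nat" where
  "concc X Y f = ncc X Y (\<lambda>x y. \<not> f x y)"

text \<open>A preference profile of agents in A over B: for each a \<in> A a strict total
order p a on B; (b1, b2) \<in> p a means a prefers b1 to b2. Outside A the relation
is empty (so that profiles are determined by their values on A).\<close>

definition profiles :: "'x set \<Rightarrow> 'y set \<Rightarrow> ('x \<Rightarrow> ('y \<times> 'y) set) set" where
  "profiles A B = {p. (\<forall>a\<in>A. strict_linear_order_on B (p a)) \<and> (\<forall>a. a \<notin> A \<longrightarrow> p a = {})}"

definition blocking ::
  "'x set \<Rightarrow> 'y set \<Rightarrow> ('x \<Rightarrow> ('y \<times> 'y) set) \<Rightarrow> ('y \<Rightarrow> ('x \<times> 'x) set) \<Rightarrow> ('x \<Rightarrow> 'y) \<Rightarrow> 'x \<Rightarrow> 'y \<Rightarrow> bool" where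
  "blocking W M pW pM mu w m \<longleftrightarrow>
     w \<in> W \<and> m \<in> M \<and> (m, mu w) \<in> pW w \<and> (w, inv_into W mu m) \<in> pM m"

definition stable ::
  "'x set \<Rightarrow> 'y set \<Rightarrow> ('x \<Rightarrow> ('y \<times> 'y) set) \<Rightarrow> ('y \<Rightarrow> ('x \<times> 'x) set) \<Rightarrow> ('x \<Rightarrow> 'y) \<Rightarrow> bool" where
  "stable W M pW pM mu \<longleftrightarrow>
     bij_betw mu W M \<and> (\<forall>w\<in>W. \<forall>m\<in>M. \<not> blocking W M pW pM mu w m)"

definition married_in_some ::
  "'x set \<Rightarrow> 'y set \<Rightarrow> 'x \<Rightarrow> 'y \<Rightarrow> ('x \<Rightarrow> ('y \<times> 'y) set) \<Rightarrow> ('y \<Rightarrow> ('x \<times> 'x) set) \<Rightarrow> bool" where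
  "married_in_some W M w m pW pM \<longleftrightarrow> (\<exists>mu. stable W M pW pM mu \<and> mu w = m)"

definition married_in_every ::
  "'x set \<Rightarrow> 'y set \<Rightarrow> 'x \<Rightarrow> 'y \<Rightarrow> ('x \<Rightarrow> ('y \<times> 'y) set) \<Rightarrow> ('y \<Rightarrow> ('x \<times> 'x) set) \<Rightarrow> bool" where
  "married_in_every W M w m pW pM \<longleftrightarrow> (\<forall>mu. stable W M pW pM mu \<longrightarrow> mu w = m)"

end

theory Submission
  imports Defs
begin



fun path :: "('a, 'b) protocol \<Rightarrow> 'a \<Rightarrow> 'b \<Rightarrow> bool list" where
  "path (Output v) x y = []"
| "path (AliceSends f P0 P1) x y = f x # (if f x then path P1 x y else path P0 x y)"
| "path (BobSends g P0 P1) x y = g y # (if g y then path P1 x y else path P0 x y)"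

lemma path_len: "length (path P x y) \<le> depth P"
  by (induction P) auto

lemma path_rect: "path P x y = path P x' y' \<Longrightarrow> run P x y' = run P x y \<and> path P x y' = path P x y"
proof (induction P)
  case (Output v) then show ?case by simp
next
  case (AliceSends f P0 P1)
  then show ?case by (cases "f x"; cases "f x'") auto
next
  case (BobSends g P0 P1)
  then show ?case by (cases "g y"; cases "g y'") auto
qed

lemma sum_pow2_less: "(\<Sum>i\<le>d. (2::nat)^i) < 2^(Suc d)"
  by (induction d) auto

lemma card_paths: "card {p::bool list. length p \<le> d} \<le> 2^(Suc d)"
proof -
  have "{p::bool list. length p \<le> d} = {xs. set xs \<subseteq> UNIV \<and> length xs \<le> d}" by auto
  then have "card {p::bool list. length p \<le> d} = (\<Sum>i\<le>d. 2^i)"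
    using card_lists_length_le[of "UNIV::bool set" d] by simp
  then show ?thesis using sum_pow2_less[of d] by simp
qed

lemma finite_paths: "finite {p::bool list. length p \<le> d}"
proof -
  have "{p::bool list. length p \<le> d} = {xs. set xs \<subseteq> UNIV \<and> length xs \<le> d}" by auto
  then show ?thesis using finite_lists_length_le[of "UNIV::bool set" d] by simp
qed

lemma fooling:
  fixes U :: "'u set"
  assumes fin: "finite U"
    and xf: "\<And>A. A \<subseteq> U \<Longrightarrow> xf A \<in> X"
    and yf: "\<And>B. B \<subseteq> U \<Longrightarrow> yf B \<in> Y"
    and gd: "\<And>A B. A \<subseteq> U \<Longrightarrow> B \<subseteq> U \<Longrightarrow> g (xf A) (yf B) \<longleftrightarrow> A \<inter> B = {}"
    and c: "nd_cost_le X Y g c"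
  shows "card U \<le> c + 1"
proof -
  obtain k P where nd: "nd_computes X Y g k P" and kc: "k + depth P \<le> c"
    using c unfolding nd_cost_le_def by blast
  have ex: "\<exists>z. length z = k \<and> run P (xf A, z) (yf (U - A), z)" if "A \<subseteq> U" for A
  proof -
    have "g (xf A) (yf (U - A))" using gd[of A "U - A"] that by auto
    then show ?thesis using nd xf[OF that] yf[of "U - A"] unfolding nd_computes_def by blast
  qed
  define Z where "Z A = (SOME z. length z = k \<and> run P (xf A, z) (yf (U - A), z))" for A
  have Z: "length (Z A) = k \<and> run P (xf A, Z A) (yf (U - A), Z A)" if "A \<subseteq> U" for A
    unfolding Z_def using someI_ex[OF ex[OF that]] .
  define h where "h A = (Z A, path P (xf A, Z A) (yf (U - A), Z A))" for A
  have sub: "A1 \<subseteq> A2" if A1: "A1 \<subseteq> U" and A2: "A2 \<subseteq> U"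
     and pe: "path P (xf A1, z) (yf (U - A1), z) = path P (xf A2, z) (yf (U - A2), z)"
     and r1: "run P (xf A1, z) (yf (U - A1), z)" and lz: "length z = k" for A1 A2 z
  proof -
    have "run P (xf A1, z) (yf (U - A2), z)" using path_rect[OF pe] r1 by simp
    then have "g (xf A1) (yf (U - A2))" using nd xf[OF A1] yf[of "U - A2"] lz
      unfolding nd_computes_def by blast
    then have "A1 \<inter> (U - A2) = {}" using gd[OF A1, of "U - A2"] by auto
    then show ?thesis using A1 by auto
  qed
  have inj: "inj_on h (Pow U)"
  proof (rule inj_onI)
    fix A1 A2 assume A1: "A1 \<in> Pow U" and A2: "A2 \<in> Pow U" and e: "h A1 = h A2"
    then have ze: "Z A1 = Z A2" and pe: "path P (xf A1, Z A1) (yf (U - A1), Z A1) = path P (xf A2, Z A1) (yf (U - A2), Z A1)"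
      unfolding h_def by auto
    have A1': "A1 \<subseteq> U" and A2': "A2 \<subseteq> U" using A1 A2 by auto
    have r1: "run P (xf A1, Z A1) (yf (U - A1), Z A1)" and l1: "length (Z A1) = k" using Z[OF A1'] by auto
    have r2: "run P (xf A2, Z A1) (yf (U - A2), Z A1)" using Z[OF A2'] ze by simp
    have "A1 \<subseteq> A2" by (rule sub[OF A1' A2' pe r1 l1])
    moreover have "A2 \<subseteq> A1" by (rule sub[OF A2' A1' pe[symmetric] r2 l1])
    ultimately show "A1 = A2" by (rule subset_antisym)
  qed
  have img: "h ` Pow U \<subseteq> {z::bool list. length z = k} \<times> {p. length p \<le> depth P}"
    using Z path_len unfolding h_def by auto
  have fin2: "finite ({z::bool list. length z = k} \<times> {p::bool list. length p \<le> depth P})"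
    using finite_paths finite_lists_length_eq[of "UNIV::bool set" k] by auto
  have "(2::nat) ^ card U = card (Pow U)" using fin by (simp add: card_Pow)
  also have "\<dots> = card (h ` Pow U)" using card_image[OF inj] by simp
  also have "\<dots> \<le> card ({z::bool list. length z = k} \<times> {p::bool list. length p \<le> depth P})"
    using card_mono[OF fin2 img] .
  also have "\<dots> = card {z::bool list. length z = k} * card {p::bool list. length p \<le> depth P}"
    by (simp add: card_cartesian_product)
  also have "\<dots> \<le> 2^k * 2^(Suc (depth P))"
  proof -
    have "card {z::bool list. length z = k} = 2^k"
      using card_lists_length_eq[of "UNIV::bool set" k] by simp
    then show ?thesis using card_paths[of "depth P"] by simp
  qed
  also have "\<dots> = 2^(k + Suc (depth P))" by (simp add: power_add)
  finally have "(2::nat) ^ card U \<le> 2^(k + Suc (depth P))" .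
  then have "card U \<le> k + Suc (depth P)" using power_increasing_iff[of "2::nat" "card U" "k + Suc (depth P)"] by simp
  then show ?thesis using kc by simp
qed




definition cls :: "'x set \<Rightarrow> 'y set \<Rightarrow> ('x \<Rightarrow> ('y \<times> 'y) set) \<Rightarrow> ('x \<Rightarrow> ('y \<times> 'y) set)" where
  "cls W M x = (\<lambda>a. if a \<in> W then x a \<inter> (M \<times> M) else {})"

lemma stable_cls: "stable W M (cls W M pW) pM mu \<longleftrightarrow> stable W M pW pM mu"
  unfolding stable_def blocking_def cls_def using bij_betwE by fastforce

lemma mis_cls: "married_in_some W M w m (cls W M pW) pM = married_in_some W M w m pW pM"
  unfolding married_in_some_def stable_cls ..

lemma mie_cls: "married_in_every W M w m (cls W M pW) pM = married_in_every W M w m pW pM"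
  unfolding married_in_every_def stable_cls ..


lemma nd_exists:
  assumes fW: "finite W" and fM: "finite M"
    and inv: "\<And>x y. g x y = g (cls W M x) y"
  shows "\<exists>c. nd_cost_le X Y g c"
proof -
  define C where "C = {c. \<forall>a. (a \<in> W \<longrightarrow> c a \<in> Pow (M \<times> M)) \<and> (a \<notin> W \<longrightarrow> c a = {})}"
  have finC: "finite C" unfolding C_def
    by (rule finite_set_of_finite_funs) (use fW fM in auto)
  have clsC: "cls W M x \<in> C" for x unfolding C_def cls_def by auto
  define kk where "kk = card C"
  have fL: "finite {z::bool list. length z = kk}"
    using finite_lists_length_eq[of "UNIV::bool set" kk] by simp
  have cL: "card {z::bool list. length z = kk} = 2^kk"
    using card_lists_length_eq[of "UNIV::bool set" kk] by simp
  have "card C \<le> card {z::bool list. length z = kk}" using cL less_exp[of "card C"] unfolding kk_def by simp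
  then obtain enc where enc: "enc ` C \<subseteq> {z::bool list. length z = kk}" and ienc: "inj_on enc C"
    using card_le_inj[OF finC fL] by blast
  define dec where "dec = inv_into C enc"
  define P where
    "P = AliceSends (\<lambda>(x, z). cls W M x = dec z) (Output False)
          (BobSends (\<lambda>(y, z). g (dec z) y) (Output False) (Output True))"
  have runP: "run P (x, z) (y, z) \<longleftrightarrow> cls W M x = dec z \<and> g (dec z) y" for x y z
    unfolding P_def by simp
  have "nd_computes X Y g kk P"
    unfolding nd_computes_def
  proof (intro ballI)
    fix x y
    show "g x y = (\<exists>z. length z = kk \<and> run P (x, z) (y, z))"
    proof
      assume gx: "g x y"
      have "dec (enc (cls W M x)) = cls W M x" unfolding dec_def using inv_into_f_f[OF ienc clsC] .
      moreover have "length (enc (cls W M x)) = kk" using enc clsC by auto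
      ultimately show "\<exists>z. length z = kk \<and> run P (x, z) (y, z)"
        using gx inv[of x y] runP by metis
    next
      assume "\<exists>z. length z = kk \<and> run P (x, z) (y, z)"
      then show "g x y" using runP inv by metis
    qed
  qed
  then show ?thesis unfolding nd_cost_le_def by blast
qed

lemma ncc_ge:
  fixes U :: "'u set"
  assumes fin: "finite U" and fW: "finite W" and fM: "finite M"
    and inv: "\<And>x y. g x y = g (cls W M x) y"
    and xf: "\<And>A. A \<subseteq> U \<Longrightarrow> xf A \<in> X"
    and yf: "\<And>B. B \<subseteq> U \<Longrightarrow> yf B \<in> Y"
    and gd: "\<And>A B. A \<subseteq> U \<Longrightarrow> B \<subseteq> U \<Longrightarrow> g (xf A) (yf B) \<longleftrightarrow> A \<inter> B = {}"
  shows "card U \<le> ncc X Y g + 1"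
proof -
  obtain c where "nd_cost_le X Y g c" using nd_exists[of W M g X Y, OF fW fM inv] by blast
  then have nc: "nd_cost_le X Y g (ncc X Y g)" unfolding ncc_def by (rule LeastI)
  show ?thesis by (rule fooling[of U xf X yf Y g, OF fin xf yf gd nc])
qed




definition best :: "('a \<times> 'a) set \<Rightarrow> 'a set \<Rightarrow> 'a" where
  "best r S = (THE x. x \<in> S \<and> (\<forall>y\<in>S. y \<noteq> x \<longrightarrow> (x, y) \<in> r))"

lemma slo_irr: "strict_linear_order_on B r \<Longrightarrow> (x, x) \<notin> r"
  unfolding strict_linear_order_on_def irrefl_def by auto

lemma slo_trans: "strict_linear_order_on B r \<Longrightarrow> (x, y) \<in> r \<Longrightarrow> (y, z) \<in> r \<Longrightarrow> (x, z) \<in> r"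
  unfolding strict_linear_order_on_def trans_def by blast

lemma slo_total: "strict_linear_order_on B r \<Longrightarrow> x \<in> B \<Longrightarrow> y \<in> B \<Longrightarrow> x \<noteq> y \<Longrightarrow> (x, y) \<in> r \<or> (y, x) \<in> r"
  unfolding strict_linear_order_on_def total_on_def by blast

lemma slo_asym: "strict_linear_order_on B r \<Longrightarrow> (x, y) \<in> r \<Longrightarrow> (y, x) \<in> r \<Longrightarrow> False"
  using slo_irr slo_trans by metis

lemma best_ex:
  assumes slo: "strict_linear_order_on B r" and fin: "finite S"
  shows "S \<subseteq> B \<Longrightarrow> S \<noteq> {} \<Longrightarrow> \<exists>x\<in>S. \<forall>y\<in>S. y \<noteq> x \<longrightarrow> (x, y) \<in> r"
  using fin
proof (induction S rule: finite_induct)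
  case empty then show ?case by simp
next
  case (insert a F)
  show ?case
  proof (cases "F = {}")
    case True then show ?thesis by simp
  next
    case False
    then obtain x where x: "x \<in> F" "\<forall>y\<in>F. y \<noteq> x \<longrightarrow> (x, y) \<in> r" using insert by auto
    have aB: "a \<in> B" and xB: "x \<in> B" using insert x by auto
    have ax: "a \<noteq> x" using x insert by auto
    show ?thesis
    proof (cases "(a, x) \<in> r")
      case True
      then show ?thesis using x slo_trans[OF slo] by (intro bexI[of _ a]) auto
    next
      case False
      then have "(x, a) \<in> r" using slo_total[OF slo aB xB ax] by auto
      then show ?thesis using x by (intro bexI[of _ x]) auto
    qed
  qed
qed

lemma best_prop:
  assumes slo: "strict_linear_order_on B r" and fin: "finite S" and SB: "S \<subseteq> B" and ne: "S \<noteq> {}"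
  shows "best r S \<in> S \<and> (\<forall>y\<in>S. y \<noteq> best r S \<longrightarrow> (best r S, y) \<in> r)"
proof -
  obtain x where x: "x \<in> S" "\<forall>y\<in>S. y \<noteq> x \<longrightarrow> (x, y) \<in> r" using best_ex[OF slo fin SB ne] by blast
  have "best r S = x" unfolding best_def
  proof (rule the_equality)
    show "x \<in> S \<and> (\<forall>y\<in>S. y \<noteq> x \<longrightarrow> (x, y) \<in> r)" using x by blast
  next
    fix x' assume x': "x' \<in> S \<and> (\<forall>y\<in>S. y \<noteq> x' \<longrightarrow> (x', y) \<in> r)"
    show "x' = x"
    proof (rule ccontr)
      assume "x' \<noteq> x"
      then have "(x, x') \<in> r" "(x', x) \<in> r" using x x' by auto
      then show False using slo_asym[OF slo] by blast
    qed
  qed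
  then show ?thesis using x by simp
qed

definition gtop :: "('y \<Rightarrow> ('x \<times> 'x) set) \<Rightarrow> ('y \<Rightarrow> 'x set) \<Rightarrow> 'y \<Rightarrow> 'x" where
  "gtop pM P m = best (pM m) (P m)"

definition GInv where
  "GInv W M pW pM P \<longleftrightarrow> (\<forall>m\<in>M. P m \<subseteq> W) \<and>
     (\<forall>m\<in>M. \<forall>w\<in>W. w \<notin> P m \<longrightarrow> (\<exists>m'\<in>M. P m' \<noteq> {} \<and> gtop pM P m' = w \<and> (m', m) \<in> pW w))"

context
  fixes W :: "'x set" and M :: "'y set" and pW pM
  assumes fW: "finite W" and fM: "finite M" and cWM: "card W = card M"
    and PW: "pW \<in> profiles W M" and PM: "pM \<in> profiles M W"
begin

lemma sloW: "w \<in> W \<Longrightarrow> strict_linear_order_on M (pW w)"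
  using PW unfolding profiles_def by auto

lemma sloM: "m \<in> M \<Longrightarrow> strict_linear_order_on W (pM m)"
  using PM unfolding profiles_def by auto

lemma ginv_ne:
  assumes I: "GInv W M pW pM P" and m: "m \<in> M"
  shows "P m \<noteq> {}"
proof
  assume e: "P m = {}"
  have ex: "\<exists>m'\<in>M. P m' \<noteq> {} \<and> gtop pM P m' = w" if "w \<in> W" for w
    using I that e m unfolding GInv_def by blast
  define f where "f w = (SOME m'. m' \<in> M \<and> P m' \<noteq> {} \<and> gtop pM P m' = w)" for w
  have f: "f w \<in> M \<and> P (f w) \<noteq> {} \<and> gtop pM P (f w) = w" if "w \<in> W" for w
    unfolding f_def using someI_ex[OF ex[OF that, unfolded Bex_def]] .
  have "inj_on f W" by (rule inj_onI) (metis f)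
  moreover have "f ` W \<subseteq> M - {m}" using f e by fastforce
  ultimately have "card W \<le> card (M - {m})"
    using card_inj_on_le fM by blast
  also have "\<dots> < card M" by (rule card_Diff1_less[OF fM m])
  finally show False using cWM by simp
qed

lemma ginv_top:
  assumes I: "GInv W M pW pM P" and m: "m \<in> M"
  shows "gtop pM P m \<in> P m \<and> (\<forall>y\<in>P m. y \<noteq> gtop pM P m \<longrightarrow> (gtop pM P m, y) \<in> pM m)"
proof -
  have sub: "P m \<subseteq> W" using I m unfolding GInv_def by auto
  show ?thesis unfolding gtop_def
    by (rule best_prop[OF sloM[OF m] finite_subset[OF sub fW] sub ginv_ne[OF I m]])
qed

lemma ginv_stable:
  assumes I: "GInv W M pW pM P" and inj: "inj_on (gtop pM P) M"
  shows "\<exists>mu. stable W M pW pM mu"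
proof -
  let ?t = "gtop pM P"
  have tW: "?t ` M \<subseteq> W" using ginv_top[OF I] I unfolding GInv_def by blast
  have "card (?t ` M) = card W" using card_image[OF inj] cWM by simp
  then have "?t ` M = W" using card_subset_eq[OF fW tW] by simp
  then have bt: "bij_betw ?t M W" using inj unfolding bij_betw_def by simp
  define mu where "mu = inv_into M ?t"
  have bmu: "bij_betw mu W M" unfolding mu_def by (rule bij_betw_inv_into[OF bt])
  have imu: "inv_into W mu m = ?t m" if "m \<in> M" for m
    unfolding mu_def using inv_into_inv_into_eq[OF bt that] .
  have mut: "mu (?t m) = m" if "m \<in> M" for m
    unfolding mu_def using inv_into_f_f[OF inj that] .
  have "\<not> blocking W M pW pM mu w m" if w: "w \<in> W" and m: "m \<in> M" for w m
  proof
    assume "blocking W M pW pM mu w m"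
    then have b1: "(m, mu w) \<in> pW w" and b2: "(w, ?t m) \<in> pM m"
      unfolding blocking_def using imu[OF m] by auto
    have "w \<notin> P m"
    proof
      assume wP: "w \<in> P m"
      have "w \<noteq> ?t m" using b2 slo_irr[OF sloM[OF m]] by auto
      then have "(?t m, w) \<in> pM m" using ginv_top[OF I m] wP by auto
      then show False using b2 slo_asym[OF sloM[OF m]] by blast
    qed
    then obtain m' where m': "m' \<in> M" "?t m' = w" "(m', m) \<in> pW w"
      using I w m unfolding GInv_def by blast
    have "mu w = m'" using mut[OF m'(1)] m'(2) by simp
    then show False using b1 m'(3) slo_asym[OF sloW[OF w]] by blast
  qed
  then have "stable W M pW pM mu" unfolding stable_def using bmu by blast
  then show ?thesis by blast
qed

lemma ginv_step:
  assumes I: "GInv W M pW pM P" and a: "a \<in> M" and b: "b \<in> M" and ab: "a \<noteq> b"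
    and ta: "gtop pM P a = w" and tb: "gtop pM P b = w" and pab: "(a, b) \<in> pW w"
  shows "GInv W M pW pM (P(b := P b - {w}))"
    and "(\<Sum>m\<in>M. card ((P(b := P b - {w})) m)) < (\<Sum>m\<in>M. card (P m))"
proof -
  let ?P = "P(b := P b - {w})"
  have wPb: "w \<in> P b" using ginv_top[OF I b] tb by simp
  have wW: "w \<in> W" using wPb I b unfolding GInv_def by auto
  have topa: "gtop pM ?P a = w" using ta ab unfolding gtop_def by simp
  have Pa: "?P a \<noteq> {}" using ginv_ne[OF I a] ab by simp
  show "GInv W M pW pM ?P"
    unfolding GInv_def
  proof (intro conjI ballI impI)
    fix m assume "m \<in> M" then show "?P m \<subseteq> W" using I unfolding GInv_def by auto
  next
    fix m w' assume m: "m \<in> M" and w': "w' \<in> W" and nin: "w' \<notin> ?P m"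
    show "\<exists>m'\<in>M. ?P m' \<noteq> {} \<and> gtop pM ?P m' = w' \<and> (m', m) \<in> pW w'"
    proof (cases "m = b \<and> w' = w")
      case True
      then show ?thesis using a topa Pa pab by blast
    next
      case False
      then have "w' \<notin> P m" using nin by (auto split: if_splits)
      then obtain m' where m': "m' \<in> M" "P m' \<noteq> {}" "gtop pM P m' = w'" "(m', m) \<in> pW w'"
        using I m w' unfolding GInv_def by blast
      show ?thesis
      proof (cases "m' = b")
        case False
        then have e1: "?P m' = P m'" and e2: "gtop pM ?P m' = gtop pM P m'" unfolding gtop_def by auto
        have "?P m' \<noteq> {} \<and> gtop pM ?P m' = w' \<and> (m', m) \<in> pW w'" using m'(2,3,4) e1 e2 by simp
        then show ?thesis using m'(1) by blast
      next
        case True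
        then have "w' = w" using m' tb by simp
        then have "(a, m) \<in> pW w" using slo_trans[OF sloW[OF wW] pab] m' True by simp
        then show ?thesis using a topa Pa \<open>w' = w\<close> by blast
      qed
    qed
  qed
  have fin: "finite (P b)" using I b fW finite_subset unfolding GInv_def by blast
  have "(\<Sum>m\<in>M. card (?P m)) = (\<Sum>m\<in>M - {b}. card (P m)) + card (P b - {w})"
    using sum.remove[OF fM b, of "\<lambda>m. card (?P m)"] by (simp add: add.commute)
  also have "\<dots> < (\<Sum>m\<in>M - {b}. card (P m)) + card (P b)"
    using card_Diff1_less[OF fin wPb] by simp
  also have "\<dots> = (\<Sum>m\<in>M. card (P m))"
    using sum.remove[OF fM b, of "\<lambda>m. card (P m)"] by (simp add: add.commute)
  finally show "(\<Sum>m\<in>M. card (?P m)) < (\<Sum>m\<in>M. card (P m))" .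
qed

lemma ginv_exists: "GInv W M pW pM P \<Longrightarrow> \<exists>mu. stable W M pW pM mu"
proof (induction "\<Sum>m\<in>M. card (P m)" arbitrary: P rule: less_induct)
  case less
  show ?case
  proof (cases "inj_on (gtop pM P) M")
    case True then show ?thesis using ginv_stable[OF less.prems] by blast
  next
    case False
    then obtain m1 m2 where m: "m1 \<in> M" "m2 \<in> M" "m1 \<noteq> m2" "gtop pM P m1 = gtop pM P m2"
      unfolding inj_on_def by blast
    define w where "w = gtop pM P m1"
    have wW: "w \<in> W" using ginv_top[OF less.prems m(1)] less.prems m(1) unfolding GInv_def w_def by blast
    have "(m1, m2) \<in> pW w \<or> (m2, m1) \<in> pW w" using slo_total[OF sloW[OF wW] m(1,2,3)] .
    then obtain a b where ab: "a \<in> M" "b \<in> M" "a \<noteq> b" "gtop pM P a = w" "gtop pM P b = w" "(a, b) \<in> pW w"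
      using m w_def by metis
    note st = ginv_step[OF less.prems ab]
    show ?thesis by (rule less.hyps[OF st(2) st(1)])
  qed
qed

lemma stable_exists: "\<exists>mu. stable W M pW pM mu"
proof (rule ginv_exists)
  show "GInv W M pW pM (\<lambda>m. W)" unfolding GInv_def by auto
qed

end




definition lexl :: "nat \<Rightarrow> nat \<Rightarrow> nat \<Rightarrow> nat \<Rightarrow> bool" where
  "lexl a b c d \<longleftrightarrow> a < c \<or> (a = c \<and> b < d)"

definition lo :: "nat \<Rightarrow> nat \<Rightarrow> bool" where "lo k x \<longleftrightarrow> 2 \<le> x \<and> x < k + 2"
definition hi :: "nat \<Rightarrow> nat \<Rightarrow> bool" where "hi k x \<longleftrightarrow> k + 2 \<le> x \<and> x < 2 * k + 2"

definition IStab :: "nat \<Rightarrow> (nat \<Rightarrow> nat \<Rightarrow> nat) \<Rightarrow> (nat \<Rightarrow> nat \<Rightarrow> nat) \<Rightarrow> (nat \<Rightarrow> nat) \<Rightarrow> (nat \<Rightarrow> nat) \<Rightarrow> bool" where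
  "IStab n tw tm s t \<longleftrightarrow> (\<forall>i<n. s i < n) \<and> (\<forall>j<n. t j < n) \<and> (\<forall>i<n. t (s i) = i) \<and> (\<forall>j<n. s (t j) = j) \<and>
     (\<forall>i<n. \<forall>j<n. \<not> (lexl (tw i j) j (tw i (s i)) (s i) \<and> lexl (tm j i) i (tm j (t j)) (t j)))"

context
  fixes n tw tm s t
  assumes IS: "IStab n tw tm s t"
begin

lemma s_lt: "i < n \<Longrightarrow> s i < n" using IS unfolding IStab_def by auto
lemma t_lt: "j < n \<Longrightarrow> t j < n" using IS unfolding IStab_def by auto
lemma ts: "i < n \<Longrightarrow> t (s i) = i" using IS unfolding IStab_def by auto
lemma st: "j < n \<Longrightarrow> s (t j) = j" using IS unfolding IStab_def by auto
lemma s_inj: "i < n \<Longrightarrow> i' < n \<Longrightarrow> s i = s i' \<Longrightarrow> i = i'" using ts by metis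
lemma t_inj: "j < n \<Longrightarrow> j' < n \<Longrightarrow> t j = t j' \<Longrightarrow> j = j'" using st by metis
lemma s_t: "i < n \<Longrightarrow> j < n \<Longrightarrow> s i = j \<longleftrightarrow> t j = i" using ts st by metis

lemma nb: "i < n \<Longrightarrow> j < n \<Longrightarrow> tw i j < tw i (s i) \<Longrightarrow> tm j i < tm j (t j) \<Longrightarrow> False"
  using IS unfolding IStab_def lexl_def by blast

lemma le1: "i < n \<Longrightarrow> j < n \<Longrightarrow> tm j i < tm j (t j) \<Longrightarrow> tw i (s i) \<le> tw i j"
  using nb by fastforce

lemma le2: "i < n \<Longrightarrow> j < n \<Longrightarrow> tw i j < tw i (s i) \<Longrightarrow> tm j (t j) \<le> tm j i"
  using nb by fastforce

end




lemma core:
  assumes IS: "IStab n tw tm s t" and nk: "2 * k + 2 \<le> n"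
    and T1: "\<And>i j. lo k i \<Longrightarrow> tw i j = (if lo k j \<and> (i - 2, j - 2) \<in> A then 0 else if j = i + k then 1 else 2)"
    and T2: "\<And>i j. hi k i \<Longrightarrow> tw i j = 0 \<longleftrightarrow> j = i - k"
    and T3: "\<And>i j. lo k j \<Longrightarrow> tm j i = (if lo k i \<and> (i - 2, j - 2) \<in> B then 0 else if i = j + k then 1 else 2)"
    and T4: "\<And>i j. hi k j \<Longrightarrow> tm j i = 0 \<longleftrightarrow> i = j - k"
    and E: "A \<inter> B = {}"
  shows "\<forall>i'<k. s (2 + i') = 2 + k + i'" and "\<forall>j'<k. s (2 + k + j') = 2 + j'"
proof -
  have c1: "s (2 + i') = 2 + k + i'" if i': "i' < k" for i'
  proof (rule ccontr)
    assume ne: "s (2 + i') \<noteq> 2 + k + i'"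
    define u where "u = 2 + i'"
    define up where "up = 2 + k + i'"
    have un: "u < n" and upn: "up < n" using i' nk unfolding u_def up_def by auto
    have lou: "lo k u" and hiup: "hi k up" using i' unfolding u_def up_def lo_def hi_def by auto
    have tup: "t up \<noteq> u" using s_t[OF IS un upn] ne unfolding u_def up_def by auto
    have "tm up u = 0" using T4[OF hiup] unfolding u_def up_def by simp
    moreover have "tm up (t up) \<noteq> 0" using T4[OF hiup] tup unfolding u_def up_def by simp
    ultimately have "tw u (s u) \<le> tw u up" using le1[OF IS un upn] by simp
    moreover have "tw u up = 1" using T1[OF lou] hiup unfolding u_def up_def lo_def hi_def by simp
    ultimately have tw0: "tw u (s u) = 0"
      using T1[OF lou, of "s u"] ne unfolding u_def up_def by (auto split: if_splits)
    define j where "j = s u"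
    have loj: "lo k j" and Aij: "(i', j - 2) \<in> A" using tw0 T1[OF lou, of j] unfolding j_def u_def
      by (auto split: if_splits)
    define vp where "vp = j + k"
    have jn: "j < n" using s_lt[OF IS un] unfolding j_def .
    have vpn: "vp < n" and hivp: "hi k vp" using loj nk unfolding vp_def lo_def hi_def by auto
    have tj: "t j = u" using s_t[OF IS un jn] j_def by simp
    have svp: "s vp \<noteq> j" using tj s_t[OF IS vpn jn] lou hivp unfolding lo_def hi_def by auto
    have "tw vp j = 0" using T2[OF hivp] unfolding vp_def by simp
    moreover have "tw vp (s vp) \<noteq> 0" using T2[OF hivp] svp unfolding vp_def by simp
    ultimately have "tm j (t j) \<le> tm j vp" using le2[OF IS vpn jn] by simp
    moreover have "tm j vp = 1" using T3[OF loj, of vp] hivp unfolding vp_def lo_def hi_def by simp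
    ultimately have "tm j u \<le> 1" using tj by simp
    moreover have "u \<noteq> j + k" using lou loj unfolding lo_def by auto
    ultimately have "(u - 2, j - 2) \<in> B" using T3[OF loj, of u] by (auto split: if_splits)
    then show False using Aij E unfolding u_def by auto
  qed
  have c2: "s (2 + k + j') = 2 + j'" if j': "j' < k" for j'
  proof (rule ccontr)
    assume ne: "s (2 + k + j') \<noteq> 2 + j'"
    define vp where "vp = 2 + k + j'"
    define j where "j = 2 + j'"
    have vpn: "vp < n" and jn: "j < n" using j' nk unfolding vp_def j_def by auto
    have hivp: "hi k vp" and loj: "lo k j" using j' unfolding vp_def j_def lo_def hi_def by auto
    have "tw vp j = 0" using T2[OF hivp] unfolding vp_def j_def by simp
    moreover have "tw vp (s vp) \<noteq> 0" using T2[OF hivp] ne unfolding vp_def j_def by simp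
    ultimately have "tm j (t j) \<le> tm j vp" using le2[OF IS vpn jn] by simp
    moreover have "tm j vp = 1" using T3[OF loj, of vp] hivp unfolding vp_def j_def lo_def hi_def by simp
    moreover have "t j \<noteq> vp" using s_t[OF IS vpn jn] ne unfolding vp_def j_def by auto
    ultimately have "tm j (t j) = 0" using T3[OF loj, of "t j"] unfolding vp_def j_def by (auto split: if_splits)
    then have lou: "lo k (t j)" using T3[OF loj, of "t j"] by (auto split: if_splits)
    define u where "u = t j"
    have u2: "2 + (u - 2) = u" and uk: "u - 2 < k" using lou unfolding u_def lo_def by auto
    have "s u = u + k" using c1[OF uk] unfolding u2 using u2 by simp
    moreover have "s u = j" using st[OF IS jn] unfolding u_def .
    ultimately show False using lou loj unfolding u_def lo_def by auto
  qed
  show "\<forall>i'<k. s (2 + i') = 2 + k + i'" using c1 by blast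
  show "\<forall>j'<k. s (2 + k + j') = 2 + j'" using c2 by blast
qed




definition twA :: "nat \<Rightarrow> (nat \<times> nat) set \<Rightarrow> nat \<Rightarrow> nat \<Rightarrow> nat" where
  "twA k A i j = (if i = 0 then (if hi k j then 0 else if j = 0 then 1 else 2)
     else if lo k i then (if lo k j \<and> (i - 2, j - 2) \<in> A then 0 else if j = i + k then 1 else 2)
     else if hi k i then (if j = i - k then 0 else if j = 0 then 1 else 2)
     else (if j = i then 0 else 1))"

definition tmA :: "nat \<Rightarrow> (nat \<times> nat) set \<Rightarrow> nat \<Rightarrow> nat \<Rightarrow> nat" where
  "tmA k B j i = (if j = 0 then (if hi k i then 0 else if i = 0 then 1 else 2)
     else if lo k j then (if lo k i \<and> (i - 2, j - 2) \<in> B then 0 else if i = j + k then 1 else 2)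
     else if hi k j then (if i = j - k then 0 else if i = 0 then 1 else 2)
     else (if i = j then 0 else 1))"

definition twB :: "nat \<Rightarrow> (nat \<times> nat) set \<Rightarrow> nat \<Rightarrow> nat \<Rightarrow> nat" where
  "twB k A i j = (if i = 0 then (if j = 0 then 0 else 1)
     else if i = 1 then (if hi k j then 0 else if j = 0 then 1 else 2)
     else if lo k i then (if lo k j \<and> (i - 2, j - 2) \<in> A then 0 else if j = i + k then 1 else 2)
     else if hi k i then (if j = i - k then 0 else 1)
     else (if j = i then 0 else 1))"

definition tmB :: "nat \<Rightarrow> (nat \<times> nat) set \<Rightarrow> nat \<Rightarrow> nat \<Rightarrow> nat" where
  "tmB k B j i = (if j = 0 then (if i = 1 then 0 else if i = 0 then 1 else 2)
     else if j = 1 then 0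
     else if lo k j then (if lo k i \<and> (i - 2, j - 2) \<in> B then 0 else if i = j + k then 1 else 2)
     else if hi k j then (if i = j - k then 0 else if i = 1 then 1 else 2)
     else (if i = j then 0 else 1))"

lemma lo_hi: "lo k x \<Longrightarrow> x \<noteq> 0 \<and> x \<noteq> 1 \<and> \<not> hi k x" "hi k x \<Longrightarrow> x \<noteq> 0 \<and> x \<noteq> 1 \<and> \<not> lo k x"
  unfolding lo_def hi_def by auto

lemma A_T1: "lo k i \<Longrightarrow> twA k A i j = (if lo k j \<and> (i - 2, j - 2) \<in> A then 0 else if j = i + k then 1 else 2)"
  using lo_hi(1)[of k i] unfolding twA_def by presburger
lemma A_T2: "hi k i \<Longrightarrow> twA k A i j = 0 \<longleftrightarrow> j = i - k"
  using lo_hi(2)[of k i] unfolding twA_def by simp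
lemma A_T3: "lo k j \<Longrightarrow> tmA k B j i = (if lo k i \<and> (i - 2, j - 2) \<in> B then 0 else if i = j + k then 1 else 2)"
  using lo_hi(1)[of k j] unfolding tmA_def by presburger
lemma A_T4: "hi k j \<Longrightarrow> tmA k B j i = 0 \<longleftrightarrow> i = j - k"
  using lo_hi(2)[of k j] unfolding tmA_def by simp
lemma B_T1: "lo k i \<Longrightarrow> twB k A i j = (if lo k j \<and> (i - 2, j - 2) \<in> A then 0 else if j = i + k then 1 else 2)"
  using lo_hi(1)[of k i] unfolding twB_def by presburger
lemma B_T2: "hi k i \<Longrightarrow> twB k A i j = 0 \<longleftrightarrow> j = i - k"
  using lo_hi(2)[of k i] unfolding twB_def by simp
lemma B_T3: "lo k j \<Longrightarrow> tmB k B j i = (if lo k i \<and> (i - 2, j - 2) \<in> B then 0 else if i = j + k then 1 else 2)"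
  using lo_hi(1)[of k j] unfolding tmB_def by presburger
lemma B_T4: "hi k j \<Longrightarrow> tmB k B j i = 0 \<longleftrightarrow> i = j - k"
  using lo_hi(2)[of k j] unfolding tmB_def by simp

lemma coreA:
  assumes IS: "IStab n (twA k A) (tmA k B) s t" and nk: "2 * k + 2 \<le> n" and E: "A \<inter> B = {}"
  shows "\<forall>i'<k. s (2 + i') = 2 + k + i'" and "\<forall>j'<k. s (2 + k + j') = 2 + j'"
  using core[OF IS nk A_T1 A_T2 A_T3 A_T4 E] by blast+

lemma coreB:
  assumes IS: "IStab n (twB k A) (tmB k B) s t" and nk: "2 * k + 2 \<le> n" and E: "A \<inter> B = {}"
  shows "\<forall>i'<k. s (2 + i') = 2 + k + i'" and "\<forall>j'<k. s (2 + k + j') = 2 + j'"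
  using core[OF IS nk B_T1 B_T2 B_T3 B_T4 E] by blast+




lemma hilo01[simp]: "\<not> hi k 0" "\<not> hi k 1" "\<not> lo k 0" "\<not> lo k 1" "\<not> hi k (Suc 0)" "\<not> lo k (Suc 0)"
  unfolding hi_def lo_def by auto

lemma A_hiw: "hi k i \<Longrightarrow> twA k A i j = (if j = i - k then 0 else if j = 0 then 1 else 2)"
  using lo_hi(2)[of k i] unfolding twA_def by presburger
lemma A_him: "hi k j \<Longrightarrow> tmA k B j i = (if i = j - k then 0 else if i = 0 then 1 else 2)"
  using lo_hi(2)[of k j] unfolding tmA_def by presburger
lemma B_him: "hi k j \<Longrightarrow> tmB k B j i = (if i = j - k then 0 else if i = 1 then 1 else 2)"
  using lo_hi(2)[of k j] unfolding tmB_def by presburger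

lemma famA_empty:
  assumes IS: "IStab n (twA k A) (tmA k B) s t" and nk: "2 * k + 2 \<le> n" and E: "A \<inter> B = {}"
  shows "s 0 = 0"
proof (rule ccontr)
  assume ne: "s 0 \<noteq> 0"
  note c = coreA[OF IS nk E]
  have pad: "s p = p" if p: "p < n" "p \<noteq> 0" "\<not> lo k p" "\<not> hi k p" for p
  proof (rule ccontr)
    assume sp: "s p \<noteq> p"
    have tp: "t p \<noteq> p" using s_t[OF IS p(1) p(1)] sp by auto
    have "twA k A p p < twA k A p (s p)" using p sp unfolding twA_def by simp
    moreover have "tmA k B p p < tmA k B p (t p)" using p tp unfolding tmA_def by simp
    ultimately show False using nb[OF IS p(1) p(1)] by blast
  qed
  define j where "j = s 0"
  have jn: "j < n" using s_lt[OF IS, of 0] nk unfolding j_def by simp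
  have "\<exists>i<n. i \<noteq> 0 \<and> s i = j"
  proof (cases "lo k j")
    case True
    then have jk: "j - 2 < k" and jj: "2 + (j - 2) = j" unfolding lo_def by auto
    have "s (2 + k + (j - 2)) = 2 + (j - 2)" using c(2) jk by blast
    then have "s (2 + k + (j - 2)) = j" using jj by simp
    then show ?thesis using nk jk by (intro exI[of _ "2 + k + (j - 2)"]) auto
  next
    case False
    show ?thesis
    proof (cases "hi k j")
      case True
      then have "s (2 + (j - 2 - k)) = j" "j - 2 - k < k" using c(1) unfolding hi_def by auto
      then show ?thesis using nk by (intro exI[of _ "2 + (j - 2 - k)"]) auto
    next
      case False
      then show ?thesis using pad[OF jn] \<open>\<not> lo k j\<close> ne jn unfolding j_def by auto
    qed
  qed
  then obtain i where "i < n" "i \<noteq> 0" "s i = s 0" unfolding j_def by auto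
  then show False using s_inj[OF IS, of i 0] nk by simp
qed

lemma famA_ne:
  assumes IS: "IStab n (twA k A) (tmA k B) s t" and nk: "2 * k + 2 \<le> n"
    and ab: "(a, b) \<in> A" "(a, b) \<in> B" "a < k" "b < k"
  shows "s 0 \<noteq> 0"
proof
  assume s0: "s 0 = 0"
  have n0: "0 < n" using nk by simp
  have t0: "t 0 = 0" using s_t[OF IS n0 n0] s0 by simp
  define u where "u = 2 + a"
  define up where "up = 2 + k + a"
  define j where "j = 2 + b"
  define vp where "vp = 2 + k + b"
  have lt: "u < n" "up < n" "j < n" "vp < n" using ab nk unfolding u_def up_def j_def vp_def by auto
  have lh: "lo k u" "hi k up" "lo k j" "hi k vp" using ab unfolding u_def up_def j_def vp_def lo_def hi_def by auto
  show False
  proof (cases "s u = up")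
    case False
    have tup: "t up \<noteq> u" "t up \<noteq> 0" using s_t[OF IS lt(1) lt(2)] s_t[OF IS n0 lt(2)] False s0 lh(2)
      unfolding hi_def by auto
    have "tmA k B up 0 < tmA k B up (t up)" using tup A_him[OF lh(2)]
      unfolding u_def up_def by simp
    moreover have "twA k A 0 up < twA k A 0 (s 0)" using s0 lh(2) unfolding twA_def hi_def by simp
    ultimately show False using nb[OF IS n0 lt(2)] by blast
  next
    case True
    show False
    proof (cases "s vp = j")
      case False
      have svp: "s vp \<noteq> 0" using s_inj[OF IS lt(4) n0] s0 lh(4) unfolding hi_def by auto
      have "twA k A vp 0 < twA k A vp (s vp)" using svp False A_hiw[OF lh(4)] lh(4)
        unfolding vp_def j_def hi_def by auto
      moreover have "tmA k B 0 vp < tmA k B 0 (t 0)" using t0 lh(4) unfolding tmA_def by simp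
      ultimately show False using nb[OF IS lt(4) n0] by blast
    next
      case vj: True
      have tj: "t j = vp" using s_t[OF IS lt(4) lt(3)] vj by simp
      have nl: "\<not> lo k up" using lh(2) unfolding hi_def lo_def by auto
      have "twA k A u j < twA k A u (s u)" using True A_T1[OF lh(1)] lh(3) ab(1) nl
        unfolding u_def up_def j_def by simp
      moreover have nl2: "\<not> lo k vp" using lh(4) unfolding hi_def lo_def by auto
      moreover have "tmA k B j u < tmA k B j (t j)" using tj A_T3[OF lh(3)] lh(1) ab(2) nl2
        unfolding u_def vp_def j_def by simp
      ultimately show False using nb[OF IS lt(1) lt(3)] by blast
    qed
  qed
qed

lemma famB_empty:
  assumes IS: "IStab n (twB k A) (tmB k B) s t" and nk: "2 * k + 2 \<le> n" and E: "A \<inter> B = {}"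
  shows "s 0 \<noteq> 0"
proof
  assume s0: "s 0 = 0"
  note c = coreB[OF IS nk E]
  have n0: "0 < n" and n1: "1 < n" using nk by auto
  have t0: "t 0 = 0" using s_t[OF IS n0 n0] s0 by simp
  have s1: "s 1 \<noteq> 0" using s_inj[OF IS n1 n0] s0 by auto
  have s1h: "\<not> hi k (s 1)"
  proof
    assume h: "hi k (s 1)"
    then have "s (2 + (s 1 - 2 - k)) = s 1" "s 1 - 2 - k < k" using c(1) unfolding hi_def by auto
    moreover have "2 + (s 1 - 2 - k) < n" using h nk unfolding hi_def by auto
    ultimately show False using s_inj[OF IS _ n1] by force
  qed
  have "twB k A 1 0 < twB k A 1 (s 1)" using s1 s1h unfolding twB_def by simp
  moreover have "tmB k B 0 1 < tmB k B 0 (t 0)" using t0 unfolding tmB_def by simp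
  ultimately show False using nb[OF IS n1 n0] by blast
qed

lemma famB_ne:
  assumes IS: "IStab n (twB k A) (tmB k B) s t" and nk: "2 * k + 2 \<le> n"
    and ab: "(a, b) \<in> A" "(a, b) \<in> B" "a < k" "b < k"
  shows "s 0 = 0"
proof -
  have n0: "0 < n" and n1: "1 < n" using nk by auto
  have step1: "\<exists>i'<k. s (2 + i') \<noteq> 2 + k + i'"
  proof (rule ccontr)
    assume "\<not> ?thesis"
    then have all: "\<forall>i'<k. s (2 + i') = 2 + k + i'" by auto
    define u where "u = 2 + a"
    define j where "j = 2 + b"
    define vp where "vp = 2 + k + b"
    have lt: "u < n" "j < n" "vp < n" using ab nk unfolding u_def j_def vp_def by auto
    have lh: "lo k u" "lo k j" "hi k vp" using ab unfolding u_def j_def vp_def lo_def hi_def by auto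
    show False
    proof (cases "s vp = j")
      case True
      have tj: "t j = vp" using s_t[OF IS lt(3) lt(2)] True by simp
      have su: "s u = u + k" using all ab(3) unfolding u_def by simp
      have nl: "\<not> lo k (u + k)" using lh(1) unfolding lo_def by auto
      have "twB k A u j < twB k A u (s u)" using su B_T1[OF lh(1)] lh(2) ab(1) nl
        unfolding u_def j_def by simp
      moreover have nl2: "\<not> lo k vp" using lh(3) unfolding hi_def lo_def by auto
      moreover have "tmB k B j u < tmB k B j (t j)" using tj B_T3[OF lh(2)] lh(1) ab(2) nl2
        unfolding u_def vp_def j_def by simp
      ultimately show False using nb[OF IS lt(1) lt(2)] by blast
    next
      case False
      have "twB k A vp j = 0" using B_T2[OF lh(3)] unfolding vp_def j_def by simp
      moreover have "twB k A vp (s vp) \<noteq> 0" using B_T2[OF lh(3)] False unfolding vp_def j_def by simp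
      ultimately have "tmB k B j (t j) \<le> tmB k B j vp" using le2[OF IS lt(3) lt(2)] by simp
      moreover have "tmB k B j vp = 1" using B_T3[OF lh(2), where i=vp] lh(3) unfolding vp_def j_def lo_def hi_def by simp
      moreover have "t j \<noteq> vp" using s_t[OF IS lt(3) lt(2)] False by auto
      ultimately have "tmB k B j (t j) = 0" using B_T3[OF lh(2), where i="t j"] unfolding vp_def j_def
        by (auto split: if_splits)
      then have lou: "lo k (t j)" using B_T3[OF lh(2), where i="t j"] by (auto split: if_splits)
      define u2 where "u2 = t j"
      have u2: "2 + (u2 - 2) = u2" and uk: "u2 - 2 < k" using lou unfolding u2_def lo_def by auto
      have "s u2 = u2 + k" using all uk u2 by (metis add.assoc add.commute)
      moreover have "s u2 = j" using st[OF IS lt(2)] unfolding u2_def .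
      ultimately show False using lou lh(2) unfolding u2_def lo_def by auto
    qed
  qed
  then obtain i where i: "i < k" "s (2 + i) \<noteq> 2 + k + i" by blast
  define u where "u = 2 + i"
  define up where "up = 2 + k + i"
  have lt: "u < n" "up < n" using i nk unfolding u_def up_def by auto
  have lh: "lo k u" "hi k up" using i unfolding u_def up_def lo_def hi_def by auto
  have tup: "t up \<noteq> u" using s_t[OF IS lt(1) lt(2)] i unfolding u_def up_def by auto
  have h1: "hi k (s 1)"
  proof (cases "t up = 1")
    case True
    then show ?thesis using s_t[OF IS n1 lt(2)] lh(2) by simp
  next
    case False
    have "tmB k B up 1 < tmB k B up (t up)" using False tup B_him[OF lh(2)] lh(2)
      unfolding u_def up_def hi_def by auto
    then have "twB k A 1 (s 1) \<le> twB k A 1 up" using le1[OF IS n1 lt(2)] by simp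
    moreover have "twB k A 1 up = 0" using lh(2) unfolding twB_def by simp
    ultimately show ?thesis unfolding twB_def by (auto split: if_splits)
  qed
  show "s 0 = 0"
  proof (rule ccontr)
    assume s0: "s 0 \<noteq> 0"
    have t0: "t 0 \<noteq> 0" "t 0 \<noteq> 1" using s_t[OF IS n0 n0] s_t[OF IS n1 n0] s0 h1 lo_hi(2)[OF h1] by auto
    have "twB k A 0 0 < twB k A 0 (s 0)" using s0 unfolding twB_def by simp
    moreover have "tmB k B 0 0 < tmB k B 0 (t 0)" using t0 unfolding tmB_def by simp
    ultimately show False using nb[OF IS n0 n0] by blast
  qed
qed




definition mkpref :: "'x set \<Rightarrow> 'y set \<Rightarrow> ('x \<Rightarrow> nat) \<Rightarrow> ('y \<Rightarrow> nat) \<Rightarrow> (nat \<Rightarrow> nat \<Rightarrow> nat) \<Rightarrow> 'x \<Rightarrow> ('y \<times> 'y) set" where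
  "mkpref X Y iX iY tt = (\<lambda>x. if x \<in> X then {(y1, y2). y1 \<in> Y \<and> y2 \<in> Y \<and>
      lexl (tt (iX x) (iY y1)) (iY y1) (tt (iX x) (iY y2)) (iY y2)} else {})"

lemma mkpref_prof:
  assumes inj: "inj_on iY Y"
  shows "mkpref X Y iX iY tt \<in> profiles X Y"
  unfolding profiles_def
proof (intro CollectI conjI ballI allI impI)
  fix x assume x: "x \<in> X"
  show "strict_linear_order_on Y (mkpref X Y iX iY tt x)"
    unfolding strict_linear_order_on_def
  proof (intro conjI)
    show "trans (mkpref X Y iX iY tt x)" unfolding trans_def mkpref_def lexl_def using x by auto
    show "irrefl (mkpref X Y iX iY tt x)" unfolding irrefl_def mkpref_def lexl_def using x by auto
    show "total_on Y (mkpref X Y iX iY tt x)" unfolding total_on_def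
    proof (intro ballI impI)
      fix y1 y2 assume y: "y1 \<in> Y" "y2 \<in> Y" "y1 \<noteq> y2"
      then have "iY y1 \<noteq> iY y2" using inj unfolding inj_on_def by blast
      then have "iY y1 < iY y2 \<or> iY y2 < iY y1" by arith
      then show "(y1, y2) \<in> mkpref X Y iX iY tt x \<or> (y2, y1) \<in> mkpref X Y iX iY tt x"
        unfolding mkpref_def lexl_def using x y by auto
    qed
  qed
next
  fix x assume "x \<notin> X" then show "mkpref X Y iX iY tt x = {}" unfolding mkpref_def by simp
qed

lemma bridge:
  assumes n0: "0 < n" and bW: "bij_betw fW {..<n} W" and bM: "bij_betw fM {..<n} M"
    and st: "stable W M (mkpref W M (inv_into {..<n} fW) (inv_into {..<n} fM) tw)
                        (mkpref M W (inv_into {..<n} fM) (inv_into {..<n} fW) tm) nu"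
  shows "IStab n tw tm (\<lambda>i. inv_into {..<n} fM (nu (fW i))) (\<lambda>j. inv_into {..<n} fW (inv_into W nu (fM j)))"
    and "nu (fW 0) = fM 0 \<longleftrightarrow> inv_into {..<n} fM (nu (fW 0)) = 0"
proof -
  define iW where "iW = inv_into {..<n} fW"
  define iM where "iM = inv_into {..<n} fM"
  have bnu: "bij_betw nu W M" using st unfolding stable_def by simp
  have binu: "bij_betw (inv_into W nu) M W" using bij_betw_inv_into[OF bnu] .
  have biW: "bij_betw iW W {..<n}" unfolding iW_def using bij_betw_inv_into[OF bW] .
  have biM: "bij_betw iM M {..<n}" unfolding iM_def using bij_betw_inv_into[OF bM] .
  have iWf: "iW (fW i) = i" if "i < n" for i
    unfolding iW_def using inv_into_f_f[OF bij_betw_imp_inj_on[OF bW]] that by simp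
  have iMf: "iM (fM i) = i" if "i < n" for i
    unfolding iM_def using inv_into_f_f[OF bij_betw_imp_inj_on[OF bM]] that by simp
  have fiM: "fM (iM y) = y" if "y \<in> M" for y
    unfolding iM_def using f_inv_into_f[of y fM "{..<n}"] bM that unfolding bij_betw_def by auto
  have fiW: "fW (iW x) = x" if "x \<in> W" for x
    unfolding iW_def using f_inv_into_f[of x fW "{..<n}"] bW that unfolding bij_betw_def by auto
  have fWin: "fW i \<in> W" if "i < n" for i using bW that unfolding bij_betw_def by auto
  have fMin: "fM i \<in> M" if "i < n" for i using bM that unfolding bij_betw_def by auto
  have nuin: "nu x \<in> M" if "x \<in> W" for x using bnu that unfolding bij_betw_def by auto
  have inuin: "inv_into W nu y \<in> W" if "y \<in> M" for y using binu that unfolding bij_betw_def by auto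
  have iWlt: "iW x < n" if "x \<in> W" for x using biW that unfolding bij_betw_def by auto
  have iMlt: "iM y < n" if "y \<in> M" for y using biM that unfolding bij_betw_def by auto
  have inu1: "inv_into W nu (nu x) = x" if "x \<in> W" for x
    using inv_into_f_f[OF bij_betw_imp_inj_on[OF bnu] that] .
  have inu2: "nu (inv_into W nu y) = y" if "y \<in> M" for y
    using f_inv_into_f[of y nu W] bnu that unfolding bij_betw_def by auto
  define s where "s i = iM (nu (fW i))" for i
  define t where "t j = iW (inv_into W nu (fM j))" for j
  have "IStab n tw tm s t"
    unfolding IStab_def
  proof (intro conjI allI impI)
    fix i assume i: "i < n"
    show "s i < n" unfolding s_def using iMlt nuin fWin i by blast
    show "t (s i) = i" unfolding s_def t_def using fiM nuin fWin inu1 iWf i by simp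
  next
    fix j assume j: "j < n"
    show "t j < n" unfolding t_def using iWlt inuin fMin j by blast
    show "s (t j) = j" unfolding s_def t_def using fiW inuin fMin inu2 iMf j by simp
  next
    fix i j assume i: "i < n" and j: "j < n"
    have nb: "\<not> blocking W M (mkpref W M iW iM tw) (mkpref M W iM iW tm) nu (fW i) (fM j)"
      using st fWin[OF i] fMin[OF j] unfolding stable_def iW_def iM_def by blast
    have e1: "(fM j, nu (fW i)) \<in> mkpref W M iW iM tw (fW i) \<longleftrightarrow> lexl (tw i j) j (tw i (s i)) (s i)"
      unfolding mkpref_def s_def using fWin[OF i] fMin[OF j] nuin[OF fWin[OF i]] iWf[OF i] iMf[OF j] by simp
    have e2: "(fW i, inv_into W nu (fM j)) \<in> mkpref M W iM iW tm (fM j) \<longleftrightarrow> lexl (tm j i) i (tm j (t j)) (t j)"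
      unfolding mkpref_def t_def using fWin[OF i] fMin[OF j] inuin[OF fMin[OF j]] iWf[OF i] iMf[OF j] by simp
    show "\<not> (lexl (tw i j) j (tw i (s i)) (s i) \<and> lexl (tm j i) i (tm j (t j)) (t j))"
      using nb e1 e2 fWin[OF i] fMin[OF j] unfolding blocking_def by blast
  qed
  then show "IStab n tw tm (\<lambda>i. inv_into {..<n} fM (nu (fW i))) (\<lambda>j. inv_into {..<n} fW (inv_into W nu (fM j)))"
    unfolding s_def t_def iW_def iM_def .
  show "nu (fW 0) = fM 0 \<longleftrightarrow> inv_into {..<n} fM (nu (fW 0)) = 0"
  proof
    assume "nu (fW 0) = fM 0" then show "inv_into {..<n} fM (nu (fW 0)) = 0" using iMf[OF n0] unfolding iM_def by simp
  next
    assume "inv_into {..<n} fM (nu (fW 0)) = 0"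
    then have "fM (iM (nu (fW 0))) = fM 0" unfolding iM_def by simp
    then show "nu (fW 0) = fM 0" using fiM[OF nuin[OF fWin[OF n0]]] by simp
  qed
qed




lemma bij0:
  assumes fin: "finite W" and c: "card W = n" and w: "w \<in> W"
  shows "\<exists>f. bij_betw f {..<n} W \<and> f 0 = w"
proof -
  have "card (W - {w}) = card {..<n - 1}" using fin c w by simp
  then obtain g where g: "bij_betw g {..<n - 1} (W - {w})"
    using finite_same_card_bij[of "{..<n - 1}" "W - {w}"] fin by auto
  have n0: "0 < n" using fin c w card_gt_0_iff by blast
  define f where "f i = (if i = 0 then w else g (i - 1))" for i
  have gin: "g i \<in> W - {w}" if "i < n - 1" for i using g that unfolding bij_betw_def by auto
  have "inj_on f {..<n}"
  proof (rule inj_onI)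
    fix i j assume i: "i \<in> {..<n}" and j: "j \<in> {..<n}" and e: "f i = f j"
    show "i = j"
    proof (cases "i = 0"; cases "j = 0")
      assume "i \<noteq> 0" "j \<noteq> 0"
      then have "g (i - 1) = g (j - 1)" using e unfolding f_def by simp
      then have "i - 1 = j - 1" using g i j \<open>i \<noteq> 0\<close> \<open>j \<noteq> 0\<close> unfolding bij_betw_def inj_on_def by auto
      then show ?thesis using \<open>i \<noteq> 0\<close> \<open>j \<noteq> 0\<close> by simp
    next
      assume "i = 0" "j \<noteq> 0"
      moreover have "j - 1 < n - 1" using j \<open>j \<noteq> 0\<close> by auto
      ultimately show ?thesis using e gin[of "j - 1"] unfolding f_def by auto
    next
      assume "i \<noteq> 0" "j = 0"
      moreover have "i - 1 < n - 1" using i \<open>i \<noteq> 0\<close> by auto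
      ultimately show ?thesis using e gin[of "i - 1"] unfolding f_def by auto
    qed simp
  qed
  moreover have "f ` {..<n} = W"
  proof
    show "f ` {..<n} \<subseteq> W" using gin w unfolding f_def by auto
  next
    show "W \<subseteq> f ` {..<n}"
    proof
      fix x assume x: "x \<in> W"
      show "x \<in> f ` {..<n}"
      proof (cases "x = w")
        case True then show ?thesis using n0 unfolding f_def by force
      next
        case False
        then have "x \<in> g ` {..<n - 1}" using g x unfolding bij_betw_def by auto
        then obtain i where "i < n - 1" "g i = x" by auto
        then show ?thesis unfolding f_def by (intro image_eqI[of _ _ "Suc i"]) auto
      qed
    qed
  qed
  ultimately have "bij_betw f {..<n} W" unfolding bij_betw_def by blast
  moreover have "f 0 = w" unfolding f_def by simp
  ultimately show ?thesis by blast
qed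

lemma all_married:
  assumes "finite W" "finite M" "card W = card M" "pW \<in> profiles W M" "pM \<in> profiles M W"
    and "\<And>nu. stable W M pW pM nu \<Longrightarrow> nu w = m"
  shows "married_in_some W M w m pW pM \<and> married_in_every W M w m pW pM"
  using stable_exists[OF assms(1-5)] assms(6) unfolding married_in_some_def married_in_every_def by blast

lemma none_married:
  assumes "finite W" "finite M" "card W = card M" "pW \<in> profiles W M" "pM \<in> profiles M W"
    and "\<And>nu. stable W M pW pM nu \<Longrightarrow> nu w \<noteq> m"
  shows "\<not> married_in_some W M w m pW pM \<and> \<not> married_in_every W M w m pW pM"
  using stable_exists[OF assms(1-5)] assms(6) unfolding married_in_some_def married_in_every_def by blast

context
  fixes W :: "'x set" and M :: "'y set" and n k fW fM
  assumes fW: "finite W" and fM: "finite M" and cW: "card W = n" and cM: "card M = n"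
    and bW: "bij_betw fW {..<n} W" and bM: "bij_betw fM {..<n} M" and nk: "2 * k + 2 \<le> n"
begin


lemma injiW: "inj_on (inv_into {..<n} fW) W" using bij_betw_imp_inj_on[OF bij_betw_inv_into[OF bW]] .
lemma injiM: "inj_on (inv_into {..<n} fM) M" using bij_betw_imp_inj_on[OF bij_betw_inv_into[OF bM]] .

lemma n0: "0 < n" using nk by simp

lemma famA:
  assumes AU: "A \<subseteq> {..<k} \<times> {..<k}" and BU: "B \<subseteq> {..<k} \<times> {..<k}"
  shows "married_in_some W M (fW 0) (fM 0) (mkpref W M (inv_into {..<n} fW) (inv_into {..<n} fM) (twA k A)) (mkpref M W (inv_into {..<n} fM) (inv_into {..<n} fW) (tmA k B)) \<longleftrightarrow> A \<inter> B = {}"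
    and "married_in_every W M (fW 0) (fM 0) (mkpref W M (inv_into {..<n} fW) (inv_into {..<n} fM) (twA k A)) (mkpref M W (inv_into {..<n} fM) (inv_into {..<n} fW) (tmA k B)) \<longleftrightarrow> A \<inter> B = {}"
proof -
  note P = mkpref_prof[OF injiM, of W "inv_into {..<n} fW" "twA k A"] mkpref_prof[OF injiW, of M "inv_into {..<n} fM" "tmA k B"]
  have cc: "card W = card M" using cW cM by simp
  have "(married_in_some W M (fW 0) (fM 0) (mkpref W M (inv_into {..<n} fW) (inv_into {..<n} fM) (twA k A)) (mkpref M W (inv_into {..<n} fM) (inv_into {..<n} fW) (tmA k B)) \<longleftrightarrow> A \<inter> B = {})
       \<and> (married_in_every W M (fW 0) (fM 0) (mkpref W M (inv_into {..<n} fW) (inv_into {..<n} fM) (twA k A)) (mkpref M W (inv_into {..<n} fM) (inv_into {..<n} fW) (tmA k B)) \<longleftrightarrow> A \<inter> B = {})"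
  proof (cases "A \<inter> B = {}")
    case True
    have "married_in_some W M (fW 0) (fM 0) (mkpref W M (inv_into {..<n} fW) (inv_into {..<n} fM) (twA k A)) (mkpref M W (inv_into {..<n} fM) (inv_into {..<n} fW) (tmA k B))
       \<and> married_in_every W M (fW 0) (fM 0) (mkpref W M (inv_into {..<n} fW) (inv_into {..<n} fM) (twA k A)) (mkpref M W (inv_into {..<n} fM) (inv_into {..<n} fW) (tmA k B))"
    proof (rule all_married[OF fW fM cc P])
      fix nu assume st: "stable W M (mkpref W M (inv_into {..<n} fW) (inv_into {..<n} fM) (twA k A)) (mkpref M W (inv_into {..<n} fM) (inv_into {..<n} fW) (tmA k B)) nu"
      have "(\<lambda>i. inv_into {..<n} fM (nu (fW i))) 0 = 0" by (rule famA_empty[OF bridge(1)[OF n0 bW bM st] nk True])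
      then show "nu (fW 0) = fM 0" using bridge(2)[OF n0 bW bM st] by simp
    qed
    then show ?thesis using True by simp
  next
    case False
    then obtain a b where ab: "(a, b) \<in> A" "(a, b) \<in> B" by auto
    then have abk: "a < k" "b < k" using AU by auto
    have "\<not> married_in_some W M (fW 0) (fM 0) (mkpref W M (inv_into {..<n} fW) (inv_into {..<n} fM) (twA k A)) (mkpref M W (inv_into {..<n} fM) (inv_into {..<n} fW) (tmA k B))
       \<and> \<not> married_in_every W M (fW 0) (fM 0) (mkpref W M (inv_into {..<n} fW) (inv_into {..<n} fM) (twA k A)) (mkpref M W (inv_into {..<n} fM) (inv_into {..<n} fW) (tmA k B))"
    proof (rule none_married[OF fW fM cc P])
      fix nu assume st: "stable W M (mkpref W M (inv_into {..<n} fW) (inv_into {..<n} fM) (twA k A)) (mkpref M W (inv_into {..<n} fM) (inv_into {..<n} fW) (tmA k B)) nu"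
      have "(\<lambda>i. inv_into {..<n} fM (nu (fW i))) 0 \<noteq> 0" by (rule famA_ne[OF bridge(1)[OF n0 bW bM st] nk ab abk])
      then show "nu (fW 0) \<noteq> fM 0" using bridge(2)[OF n0 bW bM st] by simp
    qed
    then show ?thesis using False by simp
  qed
  then show "married_in_some W M (fW 0) (fM 0) (mkpref W M (inv_into {..<n} fW) (inv_into {..<n} fM) (twA k A)) (mkpref M W (inv_into {..<n} fM) (inv_into {..<n} fW) (tmA k B)) \<longleftrightarrow> A \<inter> B = {}"
    and "married_in_every W M (fW 0) (fM 0) (mkpref W M (inv_into {..<n} fW) (inv_into {..<n} fM) (twA k A)) (mkpref M W (inv_into {..<n} fM) (inv_into {..<n} fW) (tmA k B)) \<longleftrightarrow> A \<inter> B = {}"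
    by blast+
qed


lemma famB:
  assumes AU: "A \<subseteq> {..<k} \<times> {..<k}" and BU: "B \<subseteq> {..<k} \<times> {..<k}"
  shows "married_in_some W M (fW 0) (fM 0) (mkpref W M (inv_into {..<n} fW) (inv_into {..<n} fM) (twB k A)) (mkpref M W (inv_into {..<n} fM) (inv_into {..<n} fW) (tmB k B)) \<longleftrightarrow> A \<inter> B \<noteq> {}"
    and "married_in_every W M (fW 0) (fM 0) (mkpref W M (inv_into {..<n} fW) (inv_into {..<n} fM) (twB k A)) (mkpref M W (inv_into {..<n} fM) (inv_into {..<n} fW) (tmB k B)) \<longleftrightarrow> A \<inter> B \<noteq> {}"
proof -
  define pW where "pW = mkpref W M (inv_into {..<n} fW) (inv_into {..<n} fM) (twB k A)"
  define pM where "pM = mkpref M W (inv_into {..<n} fM) (inv_into {..<n} fW) (tmB k B)"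
  have P: "pW \<in> profiles W M" "pM \<in> profiles M W"
    unfolding pW_def pM_def using mkpref_prof[OF injiM] mkpref_prof[OF injiW] by auto
  have cc: "card W = card M" using cW cM by simp
  have "(married_in_some W M (fW 0) (fM 0) pW pM \<longleftrightarrow> A \<inter> B \<noteq> {}) \<and> (married_in_every W M (fW 0) (fM 0) pW pM \<longleftrightarrow> A \<inter> B \<noteq> {})"
  proof (cases "A \<inter> B = {}")
    case True
    have "\<not> married_in_some W M (fW 0) (fM 0) pW pM \<and> \<not> married_in_every W M (fW 0) (fM 0) pW pM"
    proof (rule none_married[OF fW fM cc P])
      fix nu assume st: "stable W M pW pM nu"
      note st' = st[unfolded pW_def pM_def]
      have "(\<lambda>i. inv_into {..<n} fM (nu (fW i))) 0 \<noteq> 0" by (rule famB_empty[OF bridge(1)[OF n0 bW bM st'] nk True])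
      then show "nu (fW 0) \<noteq> fM 0" using bridge(2)[OF n0 bW bM st'] by simp
    qed
    then show ?thesis using True by simp
  next
    case False
    then obtain a b where ab: "(a, b) \<in> A" "(a, b) \<in> B" by auto
    then have abk: "a < k" "b < k" using AU by auto
    have "married_in_some W M (fW 0) (fM 0) pW pM \<and> married_in_every W M (fW 0) (fM 0) pW pM"
    proof (rule all_married[OF fW fM cc P])
      fix nu assume st: "stable W M pW pM nu"
      note st' = st[unfolded pW_def pM_def]
      have "(\<lambda>i. inv_into {..<n} fM (nu (fW i))) 0 = 0" by (rule famB_ne[OF bridge(1)[OF n0 bW bM st'] nk ab abk])
      then show "nu (fW 0) = fM 0" using bridge(2)[OF n0 bW bM st'] by simp
    qed
    then show ?thesis using False by simp
  qed
  then show "married_in_some W M (fW 0) (fM 0) (mkpref W M (inv_into {..<n} fW) (inv_into {..<n} fM) (twB k A)) (mkpref M W (inv_into {..<n} fM) (inv_into {..<n} fW) (tmB k B)) \<longleftrightarrow> A \<inter> B \<noteq> {}"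
    and "married_in_every W M (fW 0) (fM 0) (mkpref W M (inv_into {..<n} fW) (inv_into {..<n} fM) (twB k A)) (mkpref M W (inv_into {..<n} fM) (inv_into {..<n} fW) (tmB k B)) \<longleftrightarrow> A \<inter> B \<noteq> {}"
    unfolding pW_def pM_def by blast+
qed

end




lemma arith_final:
  assumes n8: "8 \<le> n" and kd: "k = (n - 2) div 2" and kc: "k * k \<le> c + 1"
  shows "1 / 16 * real n ^ 2 \<le> real c"
proof -
  have nk: "n \<le> 2 * k + 3" using kd by simp
  have k3: "3 \<le> k" using kd n8 by simp
  have "n * n \<le> (2 * k + 3) * (2 * k + 3)" using nk by (intro mult_mono) auto
  also have "\<dots> = 4 * (k * k) + 12 * k + 9" by (simp add: algebra_simps)
  finally have a: "n * n \<le> 4 * (k * k) + 12 * k + 9" .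
  have b: "3 * k \<le> k * k" using k3 by (intro mult_le_mono1)
  have "n * n + 16 \<le> 16 * (k * k)" using a b k3 by linarith
  then have "n * n \<le> 16 * c" using kc by linarith
  then have "real (n * n) \<le> real (16 * c)" by (simp only: of_nat_le_iff)
  then show ?thesis by (simp add: power2_eq_square)
qed




theorem theorem27:
  "\<exists>C::real. C > 0 \<and> (\<exists>N::nat. \<forall>n\<ge>N. \<forall>(W::nat set) (M::nat set) w m.
     card W = n \<and> card M = n \<and> finite W \<and> finite M \<and> W \<inter> M = {} \<and> w \<in> W \<and> m \<in> M \<longrightarrow>
       (let PW = profiles W M; PM = profiles M W;
            fS = married_in_some W M w m; fE = married_in_every W M w m
        in C * real n ^ 2 \<le> real (ncc PW PM fS) \<and>
           C * real n ^ 2 \<le> real (concc PW PM fS) \<and>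
           C * real n ^ 2 \<le> real (ncc PW PM fE) \<and>
           C * real n ^ 2 \<le> real (concc PW PM fE)))"
proof (intro exI[of _ "1/16"] conjI exI[of _ 8] allI impI)
  show "(0::real) < 1 / 16" by simp
next
  fix n :: nat and W M :: "nat set" and w m :: nat
  assume n8: "8 \<le> n"
  assume H: "card W = n \<and> card M = n \<and> finite W \<and> finite M \<and> W \<inter> M = {} \<and> w \<in> W \<and> m \<in> M"
  then have cW: "card W = n" and cM: "card M = n" and fW: "finite W" and fM: "finite M"
    and w: "w \<in> W" and m: "m \<in> M" by auto
  obtain gW where gW: "bij_betw gW {..<n} W" "gW 0 = w" using bij0[OF fW cW w] by blast
  obtain gM where gM: "bij_betw gM {..<n} M" "gM 0 = m" using bij0[OF fM cM m] by blast
  define k where "k = (n - 2) div 2"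
  have nk: "2 * k + 2 \<le> n" unfolding k_def using n8 by simp
  define U where "U = {..<k} \<times> {..<k}"
  have finU: "finite U" unfolding U_def by simp
  have cU: "card U = k * k" unfolding U_def by (simp add: card_cartesian_product)
  define iW where "iW = inv_into {..<n} gW"
  define iM where "iM = inv_into {..<n} gM"
  have injW: "inj_on iW W" unfolding iW_def using bij_betw_imp_inj_on[OF bij_betw_inv_into[OF gW(1)]] .
  have injM: "inj_on iM M" unfolding iM_def using bij_betw_imp_inj_on[OF bij_betw_inv_into[OF gM(1)]] .
  note fA = famA[OF fW fM cW cM gW(1) gM(1) nk, folded iW_def iM_def, unfolded gW(2) gM(2)]
  note fB = famB[OF fW fM cW cM gW(1) gM(1) nk, folded iW_def iM_def, unfolded gW(2) gM(2)]
  let ?PW = "profiles W M" and ?PM = "profiles M W"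
  let ?fS = "married_in_some W M w m" and ?fE = "married_in_every W M w m"
  have UA: "A \<subseteq> {..<k} \<times> {..<k}" if "A \<subseteq> U" for A using that unfolding U_def .
  have b1: "card U \<le> ncc ?PW ?PM ?fS + 1"
    by (rule ncc_ge[of U W M ?fS "\<lambda>A. mkpref W M iW iM (twA k A)" ?PW "\<lambda>B. mkpref M W iM iW (tmA k B)" ?PM])
       (use finU fW fM mkpref_prof[OF injM] mkpref_prof[OF injW] fA(1) UA in \<open>auto simp: mis_cls\<close>)
  have b2: "card U \<le> ncc ?PW ?PM ?fE + 1"
    by (rule ncc_ge[of U W M ?fE "\<lambda>A. mkpref W M iW iM (twA k A)" ?PW "\<lambda>B. mkpref M W iM iW (tmA k B)" ?PM])
       (use finU fW fM mkpref_prof[OF injM] mkpref_prof[OF injW] fA(2) UA in \<open>auto simp: mie_cls\<close>)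
  have b3: "card U \<le> concc ?PW ?PM ?fS + 1" unfolding concc_def
    by (rule ncc_ge[of U W M "\<lambda>x y. \<not> ?fS x y" "\<lambda>A. mkpref W M iW iM (twB k A)" ?PW "\<lambda>B. mkpref M W iM iW (tmB k B)" ?PM])
       (use finU fW fM mkpref_prof[OF injM] mkpref_prof[OF injW] fB(1) UA in \<open>auto simp: mis_cls\<close>)
  have b4: "card U \<le> concc ?PW ?PM ?fE + 1" unfolding concc_def
    by (rule ncc_ge[of U W M "\<lambda>x y. \<not> ?fE x y" "\<lambda>A. mkpref W M iW iM (twB k A)" ?PW "\<lambda>B. mkpref M W iM iW (tmB k B)" ?PM])
       (use finU fW fM mkpref_prof[OF injM] mkpref_prof[OF injW] fB(2) UA in \<open>auto simp: mie_cls\<close>)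
  have kd: "k = (n - 2) div 2" by (simp add: k_def)
  show "let PW = profiles W M; PM = profiles M W;
            fS = married_in_some W M w m; fE = married_in_every W M w m
        in 1 / 16 * real n ^ 2 \<le> real (ncc PW PM fS) \<and>
           1 / 16 * real n ^ 2 \<le> real (concc PW PM fS) \<and>
           1 / 16 * real n ^ 2 \<le> real (ncc PW PM fE) \<and>
           1 / 16 * real n ^ 2 \<le> real (concc PW PM fE)"
    unfolding Let_def
    using arith_final[OF n8 kd] b1 b2 b3 b4 cU by simp
qed



end
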